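(* Let $V$ be a finite vertex set with $|V| = n$ and let $\{k_u\}_{u\in V}$ be a degree sequence with $k_u \ge 1$ for all $u$, such that there are at least two distinct multiloop-graphs on $V$ with degree sequence $\{k_u\}$. Then the graph of multiloop-graphs $\mathcal{G}_{ll}(\{k_u\})$ is connected if and only if both of the following hold: (1) there exists a vertex $u$ with $k_u$ odd; and (2) there exists a vertex $v$ such that $k_v-(n-1)$ is negative or odd.
   Context: All graphs are on a fixed labeled vertex set $V$; a graph is a multiset $E$ of unordered pairs $(u,v)$ with $u,v\in V$, where a pair $(u,u)$ is a self-loop and an edge occurring more than once is a multiedge (or multiple self-loop, if it is a loop). The degree $k_u$ of $u$ is the number of edge-endpoints at $u$, so each self-loop at $u$ contributes $2$ to $k_u$. A multiloop-graph is such a graph in which self-loops may occur with any multiplicity but every non-loop edge $(u,v)$, $u\ne v$, occurs at most once. A double edge swap $(u,v),(x,y)\leadsto(u,x),(v,y)$ on a graph removes one copy of each of two edge occurrences $(u,v)$ and $(x,y)$ (loops allowed, i.e. possibly $u=v$ or $x=y$) and adds the edges $(u,x)$ and $(v,y)$; since edges are unordered, either pairing of endpoints may be used. It preserves the degree sequence. The graph of multiloop-graphs $\mathcal{G}_{ll}(\{k_u\})$ has as vertices all multiloop-graphs on $V$ with degree sequence $\{k_u\}$, with two distinct such graphs adjacent if one is obtained from the other by a single double edge swap (so every intermediate graph along a path must itself be a multiloop-graph). *)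

theory Defs
  imports Main "HOL-Library.Multiset"
begin

text \<open>An edge is an unordered pair, represented as a multiset of size 2:
  the edge (u,v) is {#u, v#}; a self-loop at u is {#u, u#}.
  A graph is a multiset of edges.\<close>

definition edge :: "'a \<Rightarrow> 'a \<Rightarrow> 'a multiset" where
  "edge u v = {#u, v#}"

definition is_graph_on :: "'a set \<Rightarrow> 'a multiset multiset \<Rightarrow> bool" where
  "is_graph_on V E \<longleftrightarrow> (\<forall>e \<in># E. \<exists>u v. u \<in> V \<and> v \<in> V \<and> e = edge u v)"

text \<open>Degree: number of edge-endpoints at u (a loop contributes 2).\<close>
definition degree :: "'a multiset multiset \<Rightarrow> 'a \<Rightarrow> nat" where
  "degree E u = (\<Sum>e \<in># E. count e u)"

definition multiloop_graph :: "'a set \<Rightarrow> 'a multiset multiset \<Rightarrow> bool" where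
  "multiloop_graph V E \<longleftrightarrow> is_graph_on V E \<and>
     (\<forall>u v. u \<noteq> v \<longrightarrow> count E (edge u v) \<le> 1)"

definition multiloop_graphs :: "'a set \<Rightarrow> ('a \<Rightarrow> nat) \<Rightarrow> 'a multiset multiset set" where
  "multiloop_graphs V k = {E. multiloop_graph V E \<and> (\<forall>u \<in> V. degree E u = k u)}"

definition double_edge_swap :: "'a multiset multiset \<Rightarrow> 'a multiset multiset \<Rightarrow> bool" where
  "double_edge_swap E E' \<longleftrightarrow> (\<exists>u v x y.
     {#edge u v, edge x y#} \<subseteq># E \<and>
     E' = E - {#edge u v, edge x y#} + {#edge u x, edge v y#})"

definition Gll_adj :: "'a set \<Rightarrow> ('a \<Rightarrow> nat) \<Rightarrow> 'a multiset multiset \<Rightarrow> 'a multiset multiset \<Rightarrow> bool" where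
  "Gll_adj V k E E' \<longleftrightarrow> E \<in> multiloop_graphs V k \<and> E' \<in> multiloop_graphs V k \<and>
     E \<noteq> E' \<and> (double_edge_swap E E' \<or> double_edge_swap E' E)"

definition Gll_connected :: "'a set \<Rightarrow> ('a \<Rightarrow> nat) \<Rightarrow> bool" where
  "Gll_connected V k \<longleftrightarrow> (\<forall>E \<in> multiloop_graphs V k. \<forall>E' \<in> multiloop_graphs V k.
     (Gll_adj V k)\<^sup>*\<^sup>* E E')"

end

theory Submission
  imports Defs
begin


lemma edge_sym: "edge a b = edge b a"
  by (simp add: edge_def add_mset_commute)

lemma edge_eq: "edge a b = edge c d \<longleftrightarrow> (a = c \<and> b = d) \<or> (a = d \<and> b = c)"
  unfolding edge_def by (auto simp: add_eq_conv_ex)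

lemma count_edge: "count (edge a b) v = (if a = v then 1 else 0) + (if b = v then 1 else 0)"
  by (simp add: edge_def)

lemma degree_plus: "degree (A + B) u = degree A u + degree B u"
  by (simp add: degree_def)

lemma degree_two: "degree {#e1, e2#} u = count e1 u + count e2 u"
  by (simp add: degree_def)

definition swp :: "'a multiset multiset \<Rightarrow> 'a \<Rightarrow> 'a \<Rightarrow> 'a \<Rightarrow> 'a \<Rightarrow> 'a multiset multiset" where
  "swp E u v x y = E - {#edge u v, edge x y#} + {#edge u x, edge v y#}"

lemma degree_swp:
  assumes "{#edge u v, edge x y#} \<subseteq># E"
  shows "degree (swp E u v x y) w = degree E w"
proof -
  have "E = (E - {#edge u v, edge x y#}) + {#edge u v, edge x y#}" using assms by (metis subset_mset.diff_add)
  then have "degree E w = degree (E - {#edge u v, edge x y#}) w + degree {#edge u v, edge x y#} w"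
    by (metis degree_plus)
  moreover have "degree {#edge u v, edge x y#} w = degree {#edge u x, edge v y#} w"
    by (simp add: degree_two count_edge)
  ultimately show ?thesis unfolding swp_def degree_plus by linarith
qed

lemma count_swp:
  assumes "{#edge u v, edge x y#} \<subseteq># E"
  shows "count (swp E u v x y) e + count {#edge u v, edge x y#} e = count E e + count {#edge u x, edge v y#} e"
proof -
  have "count {#edge u v, edge x y#} e \<le> count E e" using assms by (meson mset_subset_eq_count)
  then show ?thesis by (simp add: swp_def)
qed

lemma size_swp:
  assumes "{#edge u v, edge x y#} \<subseteq># E"
  shows "size (swp E u v x y) = size E"
proof -
  have "size {#edge u v, edge x y#} \<le> size E" using assms by (rule size_mset_mono)
  then show ?thesis using assms by (simp add: swp_def size_Diff_submset)
qed

lemma edge_in_V: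
  assumes "is_graph_on V E" "edge u v \<in># E" shows "u \<in> V \<and> v \<in> V"
proof -
  obtain p q where "p \<in> V" "q \<in> V" "edge u v = edge p q" using assms unfolding is_graph_on_def by blast
  then show ?thesis by (auto simp: edge_eq)
qed

lemma edge_nonloop: "p \<noteq> q \<Longrightarrow> edge p q = edge u v \<Longrightarrow> u \<noteq> v"
  by (auto simp: edge_eq)

lemma swp_ok:
  assumes ml: "multiloop_graph V E" and sub: "{#edge u v, edge x y#} \<subseteq># E"
    and f1: "u \<noteq> x \<Longrightarrow> edge u x \<notin># E" and f2: "v \<noteq> y \<Longrightarrow> edge v y \<notin># E"
    and f12: "u \<noteq> x \<Longrightarrow> v \<noteq> y \<Longrightarrow> edge u x \<noteq> edge v y"
  shows "multiloop_graph V (swp E u v x y)"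
proof -
  have g: "is_graph_on V E" using ml unfolding multiloop_graph_def by simp
  have inE: "edge u v \<in># E" "edge x y \<in># E" using mset_subset_eqD[OF sub] by auto
  have inV: "u \<in> V" "v \<in> V" "x \<in> V" "y \<in> V" using edge_in_V[OF g inE(1)] edge_in_V[OF g inE(2)] by auto
  have "is_graph_on V (swp E u v x y)"
    unfolding is_graph_on_def
  proof
    fix e assume "e \<in># swp E u v x y"
    then have "e \<in># E \<or> e = edge u x \<or> e = edge v y" unfolding swp_def
      by (auto dest: in_diffD)
    then show "\<exists>a b. a \<in> V \<and> b \<in> V \<and> e = edge a b" using g inV unfolding is_graph_on_def by blast
  qed
  moreover have "count (swp E u v x y) (edge p q) \<le> 1" if "p \<noteq> q" for p q
  proof -
    have c: "count (swp E u v x y) (edge p q) + count {#edge u v, edge x y#} (edge p q) = count E (edge p q) + count {#edge u x, edge v y#} (edge p q)"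
      by (rule count_swp[OF sub])
    have cE: "count E (edge p q) \<le> 1" using ml that unfolding multiloop_graph_def by blast
    show ?thesis
    proof (cases "edge p q = edge u x")
      case A: True
      have ux: "u \<noteq> x" using edge_nonloop[OF that A] .
      have "count E (edge p q) = 0" using f1[OF ux] A by (simp add: count_eq_zero_iff)
      moreover have "edge p q \<noteq> edge v y"
      proof
        assume B: "edge p q = edge v y"
        have "v \<noteq> y" using edge_nonloop[OF that B] .
        then show False using f12[OF ux] A B by simp
      qed
      then have "count {#edge u x, edge v y#} (edge p q) = 1" using A by simp
      ultimately show ?thesis using c by linarith
    next
      case A: False
      show ?thesis
      proof (cases "edge p q = edge v y")
        case B: True
        have vy: "v \<noteq> y" using edge_nonloop[OF that B] .
        have "count E (edge p q) = 0" using f2[OF vy] B by (simp add: count_eq_zero_iff)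
        moreover have "count {#edge u x, edge v y#} (edge p q) = 1" using A B by simp
        ultimately show ?thesis using c by linarith
      next
        case B: False
        then have "count {#edge u x, edge v y#} (edge p q) = 0" using A by simp
        then show ?thesis using c cE by linarith
      qed
    qed
  qed
  ultimately show ?thesis unfolding multiloop_graph_def by (metis edge_def)
qed

lemma swp_des: "{#edge u v, edge x y#} \<subseteq># E \<Longrightarrow> double_edge_swap E (swp E u v x y)"
  unfolding double_edge_swap_def swp_def
  by (rule exI[of _ u], rule exI[of _ v], rule exI[of _ x], rule exI[of _ y]) simp

lemma swp_state:
  assumes st: "E \<in> multiloop_graphs V k" and sub: "{#edge u v, edge x y#} \<subseteq># E"
    and f1: "u \<noteq> x \<Longrightarrow> edge u x \<notin># E" and f2: "v \<noteq> y \<Longrightarrow> edge v y \<notin># E"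
    and f12: "u \<noteq> x \<Longrightarrow> v \<noteq> y \<Longrightarrow> edge u x \<noteq> edge v y"
  shows "swp E u v x y \<in> multiloop_graphs V k \<and> (Gll_adj V k)\<^sup>*\<^sup>* E (swp E u v x y)"
proof -
  have st': "swp E u v x y \<in> multiloop_graphs V k"
    using st swp_ok[OF _ sub f1 f2 f12] degree_swp[OF sub] unfolding multiloop_graphs_def by auto
  moreover have "(Gll_adj V k)\<^sup>*\<^sup>* E (swp E u v x y)"
  proof (cases "E = swp E u v x y")
    case True then show ?thesis by simp
  next
    case False
    then have "Gll_adj V k E (swp E u v x y)" using st st' swp_des[OF sub] unfolding Gll_adj_def by blast
    then show ?thesis by blast
  qed
  ultimately show ?thesis by blast
qed


definition nadj :: "'a multiset multiset \<Rightarrow> 'a \<Rightarrow> 'a \<Rightarrow> bool" where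
  "nadj E a b \<longleftrightarrow> a \<noteq> b \<and> edge a b \<in># E"

definition nbrs :: "'a multiset multiset \<Rightarrow> 'a \<Rightarrow> 'a set" where
  "nbrs E v = {u. nadj E v u}"

lemma nadj_sym: "nadj E a b \<longleftrightarrow> nadj E b a"
  unfolding nadj_def using edge_sym[of a b] by auto

lemma nbrs_sub: "is_graph_on V E \<Longrightarrow> nbrs E v \<subseteq> V"
  unfolding nbrs_def nadj_def by (auto dest: edge_in_V)

lemma nbrs_finite: "finite (nbrs E v)"
proof -
  have "nbrs E v \<subseteq> \<Union> (set_mset ` set_mset E)"
  proof
    fix u assume "u \<in> nbrs E v"
    then have "edge v u \<in># E" unfolding nbrs_def nadj_def by simp
    moreover have "u \<in># edge v u" by (simp add: edge_def)
    ultimately show "u \<in> \<Union> (set_mset ` set_mset E)" by blast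
  qed
  then show ?thesis by (rule finite_subset) auto
qed

lemma degree_decomp:
  assumes ml: "multiloop_graph V E"
  shows "degree E v = card (nbrs E v) + 2 * count E (edge v v)"
proof -
  have g: "is_graph_on V E" using ml unfolding multiloop_graph_def by simp
  define N where "N = nbrs E v"
  have fin: "finite N" unfolding N_def by (rule nbrs_finite)
  have decomp: "E = filter_mset (\<lambda>e. v \<notin># e) E + replicate_mset (count E (edge v v)) (edge v v)
      + mset_set (edge v ` N)"
  proof (rule multiset_eqI)
    fix e
    show "count E e = count (filter_mset (\<lambda>e. v \<notin># e) E + replicate_mset (count E (edge v v)) (edge v v)
      + mset_set (edge v ` N)) e"
    proof (cases "v \<in># e")
      case False
      then have "e \<noteq> edge v v" "e \<notin> edge v ` N" by (auto simp: edge_def)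
      then show ?thesis using False fin by (simp add: count_mset_set')
    next
      case True
      show ?thesis
      proof (cases "e \<in># E")
        case False
        then have "e \<notin> edge v ` N" unfolding N_def nbrs_def nadj_def by auto
        then show ?thesis using True False fin by (auto simp: count_mset_set' not_in_iff)
      next
        case inE: True
        obtain p q where pq: "e = edge p q" using g inE unfolding is_graph_on_def by blast
        have "v = p \<or> v = q" using True pq by (simp add: edge_def)
        then obtain r where r: "e = edge v r" using pq edge_sym by metis
        show ?thesis
        proof (cases "r = v")
          case True
          then have "e \<notin> edge v ` N" using r unfolding N_def nbrs_def nadj_def by (auto simp: edge_eq)
          then show ?thesis using True r fin by (simp add: count_mset_set' edge_def)
        next
          case False
          then have "r \<in> N" using r inE unfolding N_def nbrs_def nadj_def by auto
          then have ein: "e \<in> edge v ` N" using r by auto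
          have "count E e \<le> 1" using ml False r unfolding multiloop_graph_def by auto
          moreover have "count E e \<ge> 1" using inE by (simp add: Suc_le_eq)
          ultimately have c1: "count E e = 1" by linarith
          have "e \<noteq> edge v v" using r False by (auto simp: edge_eq)
          then show ?thesis using True ein fin c1 by (simp add: count_mset_set')
        qed
      qed
    qed
  qed
  have d1: "degree (filter_mset (\<lambda>e. v \<notin># e) E) v = 0"
    unfolding degree_def by (rule sum_mset.neutral) (auto simp: not_in_iff)
  have d2: "degree (replicate_mset (count E (edge v v)) (edge v v)) v = 2 * count E (edge v v)"
    unfolding degree_def by (simp add: edge_def sum_mset_replicate_mset)
  have inj: "inj_on (edge v) N" unfolding N_def nbrs_def nadj_def inj_on_def by (auto simp: edge_eq)
  have "degree (mset_set (edge v ` N)) v = (\<Sum>e\<in>edge v ` N. count e v)"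
    unfolding degree_def by (simp add: sum_unfold_sum_mset)
  also have "\<dots> = (\<Sum>u\<in>N. count (edge v u) v)" by (rule sum.reindex[OF inj, unfolded comp_def])
  also have "\<dots> = (\<Sum>u\<in>N. 1)"
    by (rule sum.cong) (auto simp: N_def nbrs_def nadj_def count_edge)
  also have "\<dots> = card N" by simp
  finally have d3: "degree (mset_set (edge v ` N)) v = card N" .
  have "degree E v = degree (filter_mset (\<lambda>e. v \<notin># e) E) v + degree (replicate_mset (count E (edge v v)) (edge v v)) v
      + degree (mset_set (edge v ` N)) v"
    by (subst decomp) (simp only: degree_plus)
  then show ?thesis using d1 d2 d3 N_def by simp
qed


definition is_loop :: "'a multiset \<Rightarrow> bool" where
  "is_loop e \<longleftrightarrow> (\<exists>u. e = edge u u)"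

lemma is_loop_edge[simp]: "is_loop (edge a b) \<longleftrightarrow> a = b"
  unfolding is_loop_def by (auto simp: edge_eq)

definition nl :: "'a multiset multiset \<Rightarrow> nat" where
  "nl E = size (filter_mset (\<lambda>e. \<not> is_loop e) E)"

lemma nl_swp:
  assumes sub: "{#edge u v, edge x y#} \<subseteq># E"
  shows "nl (swp E u v x y) + nl {#edge u v, edge x y#} = nl E + nl {#edge u x, edge v y#}"
proof -
  let ?P = "\<lambda>e. \<not> is_loop e"
  have s: "filter_mset ?P {#edge u v, edge x y#} \<subseteq># filter_mset ?P E"
    using sub by (rule multiset_filter_mono)
  have eq: "filter_mset ?P (swp E u v x y) = filter_mset ?P E - filter_mset ?P {#edge u v, edge x y#} + filter_mset ?P {#edge u x, edge v y#}"
    unfolding swp_def by (simp only: filter_union_mset filter_diff_mset)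
  have "size (filter_mset ?P {#edge u v, edge x y#}) \<le> size (filter_mset ?P E)"
    using s by (rule size_mset_mono)
  then show ?thesis unfolding nl_def eq size_union size_Diff_submset[OF s] by linarith
qed

lemma pair_sub: "a \<in># E \<Longrightarrow> b \<in># E \<Longrightarrow> a \<noteq> b \<Longrightarrow> {#a, b#} \<subseteq># E"
  by (simp add: insert_subset_eq_iff in_diff_count)

lemma in_swp_old: "e \<in># E \<Longrightarrow> e \<noteq> edge u v \<Longrightarrow> e \<noteq> edge x y \<Longrightarrow> e \<in># swp E u v x y"
  unfolding swp_def by (simp add: in_diff_count)

lemma in_swp_new: "edge u x \<in># swp E u v x y" "edge v y \<in># swp E u v x y"
  unfolding swp_def by simp_all

lemma notin_swp: "e \<notin># E \<Longrightarrow> e \<noteq> edge u x \<Longrightarrow> e \<noteq> edge v y \<Longrightarrow> e \<notin># swp E u v x y"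
  unfolding swp_def by (auto dest: in_diffD)


lemma nadj_in: "nadj E a b \<Longrightarrow> edge a b \<in># E" "nadj E a b \<Longrightarrow> edge b a \<in># E" "nadj E a b \<Longrightarrow> a \<noteq> b"
  unfolding nadj_def by (auto simp: edge_sym)

lemma not_nadj: "a \<noteq> b \<Longrightarrow> \<not> nadj E a b \<Longrightarrow> edge a b \<notin># E"
  unfolding nadj_def by auto

lemma nl2: "nl {#edge a b, edge c d#} = (if a = b then 0 else 1) + (if c = d then 0 else 1)"
  unfolding nl_def by simp

lemma move3:
  assumes st: "E \<in> multiloop_graphs V k" and xa: "nadj E x a" and xb: "nadj E x b" and ab: "a \<noteq> b"
    and nab: "\<not> nadj E a b"
  shows "\<exists>E'. E' \<in> multiloop_graphs V k \<and> (Gll_adj V k)\<^sup>*\<^sup>* E E' \<and> nl E' < nl E"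
proof -
  have xa': "x \<noteq> a" "x \<noteq> b" using xa xb by (auto dest: nadj_in)
  have sub: "{#edge a x, edge b x#} \<subseteq># E"
    by (rule pair_sub) (use xa xb ab xa' in \<open>auto dest: nadj_in simp: edge_eq\<close>)
  have "swp E a x b x \<in> multiloop_graphs V k \<and> (Gll_adj V k)\<^sup>*\<^sup>* E (swp E a x b x)"
    by (rule swp_state[OF st sub]) (use nab in \<open>auto simp: nadj_def\<close>)
  moreover have "nl (swp E a x b x) < nl E" using nl_swp[OF sub] xa' ab by (simp add: nl2)
  ultimately show ?thesis by blast
qed


lemma moveP:
  assumes st: "E \<in> multiloop_graphs V k" and ab: "nadj E a b" and ac: "nadj E a c" and bc: "b \<noteq> c"
    and wz: "nadj E w z" and wa: "w \<noteq> a" and za: "z \<noteq> a" and naw: "\<not> nadj E a w"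
    and naz: "\<not> nadj E a z" and nbz: "\<not> nadj E b z" and ncw: "\<not> nadj E c w"
  shows "\<exists>E'. E' \<in> multiloop_graphs V k \<and> (Gll_adj V k)\<^sup>*\<^sup>* E E' \<and> nl E' < nl E"
proof -
  have d: "a \<noteq> b" "a \<noteq> c" "w \<noteq> z" using ab ac wz by (auto dest: nadj_in)
  have d2: "w \<noteq> b" "w \<noteq> c" "z \<noteq> b" "z \<noteq> c" using ab ac naw naz by auto
  have sub1: "{#edge a b, edge w z#} \<subseteq># E"
    by (rule pair_sub) (use ab wz wa za in \<open>auto dest: nadj_in simp: edge_eq\<close>)
  define E1 where "E1 = swp E a b w z"
  have s1: "E1 \<in> multiloop_graphs V k \<and> (Gll_adj V k)\<^sup>*\<^sup>* E E1"
    unfolding E1_def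
    by (rule swp_state[OF st sub1]) (use naw nbz d d2 wa za in \<open>auto simp: edge_eq nadj_def\<close>)
  have n1: "nl E1 = nl E" using nl_swp[OF sub1] d d2 wa za unfolding E1_def by (simp add: nl2)
  have in1: "edge w a \<in># E1" unfolding E1_def by (metis in_swp_new(1) edge_sym)
  have in2: "edge c a \<in># E1" unfolding E1_def
    by (rule in_swp_old) (use ac d bc wa za in \<open>auto dest: nadj_in simp: edge_eq\<close>)
  have sub2: "{#edge w a, edge c a#} \<subseteq># E1"
    by (rule pair_sub[OF in1 in2]) (use d2 in \<open>auto simp: edge_eq\<close>)
  have "edge w c \<notin># E" using ncw d2 edge_sym[of w c] unfolding nadj_def by auto
  then have nwc: "edge w c \<notin># E1" unfolding E1_def
    by (rule notin_swp) (use d d2 wa in \<open>auto simp: edge_eq\<close>)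
  define E2 where "E2 = swp E1 w a c a"
  have s2: "E2 \<in> multiloop_graphs V k \<and> (Gll_adj V k)\<^sup>*\<^sup>* E1 E2"
    unfolding E2_def by (rule swp_state[OF conjunct1[OF s1] sub2]) (use nwc in auto)
  have n2: "nl E2 < nl E1" using nl_swp[OF sub2] d d2 wa unfolding E2_def by (simp add: nl2)
  show ?thesis using s1 s2 n1 n2 by (metis rtranclp_trans)
qed

lemma moveQ:
  assumes st: "E \<in> multiloop_graphs V k" and ab: "nadj E a b" and ac: "nadj E a c" and ad: "nadj E a d"
    and bc: "b \<noteq> c" and bd': "b \<noteq> d" and cd: "c \<noteq> d" and bd: "nadj E b d"
    and ny: "\<forall>z. \<not> nadj E y z" and yy: "edge y y \<in># E"
  shows "\<exists>E'. E' \<in> multiloop_graphs V k \<and> (Gll_adj V k)\<^sup>*\<^sup>* E E' \<and> nl E' < nl E"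
proof -
  have d: "a \<noteq> b" "a \<noteq> c" "a \<noteq> d" using ab ac ad by (auto dest: nadj_in)
  have ba: "nadj E b a" "nadj E c a" "nadj E d a"
    using ab ac ad nadj_sym[of E a b] nadj_sym[of E a c] nadj_sym[of E a d] by simp_all
  have dy: "y \<noteq> a" "y \<noteq> b" "y \<noteq> c" "y \<noteq> d"
    using spec[OF ny, of b] spec[OF ny, of a] ab ba by auto
  have ny': "\<And>z. y \<noteq> z \<Longrightarrow> edge y z \<notin># E" "\<And>z. y \<noteq> z \<Longrightarrow> edge z y \<notin># E"
  proof -
    fix z assume "y \<noteq> z" then show "edge y z \<notin># E" using ny unfolding nadj_def by auto
  next
    fix z assume "y \<noteq> z" then show "edge z y \<notin># E" using ny edge_sym[of z y] unfolding nadj_def by auto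
  qed
  have sub1: "{#edge a b, edge y y#} \<subseteq># E"
    by (rule pair_sub) (use ab yy dy in \<open>auto dest: nadj_in simp: edge_eq\<close>)
  define E1 where "E1 = swp E a b y y"
  have s1: "E1 \<in> multiloop_graphs V k \<and> (Gll_adj V k)\<^sup>*\<^sup>* E E1"
    unfolding E1_def
    by (rule swp_state[OF st sub1]) (use ny' d dy in \<open>auto simp: edge_eq\<close>)
  have n1: "nl E1 = nl E + 1" using nl_swp[OF sub1] d dy unfolding E1_def by (simp add: nl2)
  have in1: "edge y a \<in># E1" unfolding E1_def by (metis in_swp_new(1) edge_sym)
  have in2: "edge c a \<in># E1" unfolding E1_def
    by (rule in_swp_old) (use ac d bc dy in \<open>auto dest: nadj_in simp: edge_eq\<close>)
  have sub2: "{#edge y a, edge c a#} \<subseteq># E1"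
    by (rule pair_sub[OF in1 in2]) (use dy in \<open>auto simp: edge_eq\<close>)
  have nyc: "edge y c \<notin># E1" unfolding E1_def
    by (rule notin_swp) (use ny' d dy bc in \<open>auto simp: edge_eq\<close>)
  define E2 where "E2 = swp E1 y a c a"
  have s2: "E2 \<in> multiloop_graphs V k \<and> (Gll_adj V k)\<^sup>*\<^sup>* E1 E2"
    unfolding E2_def by (rule swp_state[OF conjunct1[OF s1] sub2]) (use nyc in auto)
  have n2: "nl E2 + 1 = nl E1" using nl_swp[OF sub2] d dy unfolding E2_def by (simp add: nl2)
  have in3: "edge y b \<in># E2" unfolding E2_def
  proof (rule in_swp_old)
    show "edge y b \<in># E1" unfolding E1_def by (metis in_swp_new(2) edge_sym)
  qed (use d dy in \<open>auto simp: edge_eq\<close>)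
  have in4: "edge d b \<in># E2" unfolding E2_def
  proof (rule in_swp_old)
    show "edge d b \<in># E1" unfolding E1_def
      by (rule in_swp_old) (use bd d dy in \<open>auto dest: nadj_in simp: edge_eq\<close>)
  qed (use d dy cd in \<open>auto simp: edge_eq\<close>)
  have sub3: "{#edge y b, edge d b#} \<subseteq># E2"
    by (rule pair_sub[OF in3 in4]) (use dy in \<open>auto simp: edge_eq\<close>)
  have nyd: "edge y d \<notin># E2" unfolding E2_def
  proof (rule notin_swp)
    show "edge y d \<notin># E1" unfolding E1_def
      by (rule notin_swp) (use ny' d dy bd' in \<open>auto simp: edge_eq\<close>)
  qed (use d dy cd in \<open>auto simp: edge_eq\<close>)
  define E3 where "E3 = swp E2 y b d b"
  have s3: "E3 \<in> multiloop_graphs V k \<and> (Gll_adj V k)\<^sup>*\<^sup>* E2 E3"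
    unfolding E3_def by (rule swp_state[OF conjunct1[OF s2] sub3]) (use nyd in auto)
  have n3: "nl E3 + 1 = nl E2" using nl_swp[OF sub3] d dy bd' unfolding E3_def by (simp add: nl2)
  have "(Gll_adj V k)\<^sup>*\<^sup>* E E3" using s1 s2 s3 by (meson rtranclp_trans)
  moreover have "nl E3 < nl E" using n1 n2 n3 by linarith
  ultimately show ?thesis using s3 by blast
qed


definition cluster :: "'a multiset multiset \<Rightarrow> bool" where
  "cluster E \<longleftrightarrow> (\<forall>x a b. nadj E x a \<and> nadj E x b \<and> a \<noteq> b \<longrightarrow> nadj E a b)"

definition matching :: "'a multiset multiset \<Rightarrow> bool" where
  "matching E \<longleftrightarrow> (\<forall>a b c. nadj E a b \<and> nadj E a c \<longrightarrow> b = c)"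

lemma state_ml: "E \<in> multiloop_graphs V k \<Longrightarrow> multiloop_graph V E"
  unfolding multiloop_graphs_def by simp

lemma state_deg: "E \<in> multiloop_graphs V k \<Longrightarrow> u \<in> V \<Longrightarrow> k u = card (nbrs E u) + 2 * count E (edge u u)"
  using degree_decomp[OF state_ml] unfolding multiloop_graphs_def by fastforce

lemma nadj_V: "E \<in> multiloop_graphs V k \<Longrightarrow> nadj E a b \<Longrightarrow> a \<in> V \<and> b \<in> V"
  using edge_in_V[of V E a b] unfolding multiloop_graphs_def multiloop_graph_def nadj_def by auto

lemma reach_matching:
  assumes fin: "finite V" and k1: "\<forall>u\<in>V. k u \<ge> 1" and odd: "\<exists>u\<in>V. odd (k u)"
    and nonfull: "\<exists>v\<in>V. k v < card V - 1 \<or> odd (k v - (card V - 1))"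
  shows "E \<in> multiloop_graphs V k \<Longrightarrow> \<exists>M. M \<in> multiloop_graphs V k \<and> (Gll_adj V k)\<^sup>*\<^sup>* E M \<and> matching M"
proof (induction "nl E" arbitrary: E rule: less_induct)
  case less
  note st = less.prems
  have step: "\<exists>M. M \<in> multiloop_graphs V k \<and> (Gll_adj V k)\<^sup>*\<^sup>* E M \<and> matching M"
    if ex: "\<exists>E'. E' \<in> multiloop_graphs V k \<and> (Gll_adj V k)\<^sup>*\<^sup>* E E' \<and> nl E' < nl E"
  proof -
    obtain E' where E': "E' \<in> multiloop_graphs V k" "(Gll_adj V k)\<^sup>*\<^sup>* E E'" "nl E' < nl E" using ex by blast
    obtain M where "M \<in> multiloop_graphs V k" "(Gll_adj V k)\<^sup>*\<^sup>* E' M" "matching M"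
      using less.hyps[OF E'(3) E'(1)] by blast
    then show ?thesis using E'(2) by (meson rtranclp_trans)
  qed
  show ?case
  proof (cases "\<exists>x a b. nadj E x a \<and> nadj E x b \<and> a \<noteq> b \<and> \<not> nadj E a b")
    case True
    then obtain x a b where "nadj E x a" "nadj E x b" "a \<noteq> b" "\<not> nadj E a b" by blast
    then show ?thesis by (intro step move3[OF st])
  next
    case False
    then have cl: "\<And>x a b. nadj E x a \<Longrightarrow> nadj E x b \<Longrightarrow> a \<noteq> b \<Longrightarrow> nadj E a b" by blast
    show ?thesis
    proof (cases "matching E")
      case True then show ?thesis using st by blast
    next
      case False
      then obtain a b c where ab: "nadj E a b" and ac: "nadj E a c" and bc: "b \<noteq> c"
        unfolding matching_def by blast
      have ba: "nadj E b a" and ca: "nadj E c a" using ab ac nadj_sym[of E a b] nadj_sym[of E a c] by simp_all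
      show ?thesis
      proof (cases "\<exists>w z. nadj E w z \<and> w \<noteq> a \<and> z \<noteq> a \<and> \<not> nadj E a w \<and> \<not> nadj E a z")
        case True
        then obtain w z where wz: "nadj E w z" "w \<noteq> a" "z \<noteq> a" "\<not> nadj E a w" "\<not> nadj E a z" by blast
        have nbz: "\<not> nadj E b z" using cl[OF ba, of z] wz(3,5) by auto
        have ncw: "\<not> nadj E c w" using cl[OF ca, of w] wz(2,4) by auto
        show ?thesis by (rule step, rule moveP[OF st ab ac bc wz(1,2,3,4,5) nbz ncw])
      next
        case False
        then have C4: "\<And>w z. nadj E w z \<Longrightarrow> w = a \<or> z = a \<or> nadj E a w \<or> nadj E a z" by blast
        have aV: "a \<in> V" using nadj_V[OF st ab] by simp
        have "\<exists>y\<in>V. y \<noteq> a \<and> \<not> nadj E a y"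
        proof (rule ccontr)
          assume "\<not> ?thesis"
          then have all: "\<And>y. y \<in> V \<Longrightarrow> y \<noteq> a \<Longrightarrow> nadj E a y" by blast
          have nb: "nbrs E v = V - {v}" if vV: "v \<in> V" for v
          proof
            show "nbrs E v \<subseteq> V - {v}" using nbrs_sub[OF state_ml[OF st, unfolded multiloop_graph_def, THEN conjunct1]]
              unfolding nbrs_def nadj_def by auto
          next
            show "V - {v} \<subseteq> nbrs E v"
            proof
              fix u assume u: "u \<in> V - {v}"
              show "u \<in> nbrs E v"
              proof (cases "v = a")
                case True then show ?thesis using all u unfolding nbrs_def by auto
              next
                case va: False
                show ?thesis
                proof (cases "u = a")
                  case True
                  then show ?thesis using all[OF vV va] nadj_sym[of E a v] unfolding nbrs_def by simp
                next
                  case False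
                  then have "nadj E a u" "nadj E a v" using all u vV va by auto
                  moreover have "v \<noteq> u" using u by blast
                  ultimately have "nadj E v u" using cl[of a v u] by simp
                  then show ?thesis unfolding nbrs_def by simp
                qed
              qed
            qed
          qed
          obtain v where vV: "v \<in> V" and nf: "k v < card V - 1 \<or> odd (k v - (card V - 1))" using nonfull by blast
          have "k v = card V - 1 + 2 * count E (edge v v)" using state_deg[OF st vV] nb[OF vV] fin vV by simp
          then have "\<not> k v < card V - 1" "k v - (card V - 1) = 2 * count E (edge v v)" by simp_all
          then show False using nf by simp
        qed
        then obtain y where yV: "y \<in> V" and ya: "y \<noteq> a" and nay: "\<not> nadj E a y" by blast
        have ny: "\<forall>z. \<not> nadj E y z"
        proof (intro allI notI)
          fix z assume yz: "nadj E y z"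
          have zy: "nadj E z y" using yz nadj_sym[of E y z] by simp
          have "z = a \<or> nadj E a z" using C4[OF yz] ya nay by blast
          then show False
          proof
            assume "z = a" then show False using zy nay by simp
          next
            assume az: "nadj E a z"
            have "nadj E z a" using az nadj_sym[of E a z] by simp
            then have "nadj E a y" using cl[OF _ zy] ya by simp
            then show False using nay by simp
          qed
        qed
        have "nbrs E y = {}" using ny unfolding nbrs_def by simp
        then have "k y = 2 * count E (edge y y)" using state_deg[OF st yV] by simp
        then have "count E (edge y y) \<noteq> 0" using k1 yV by auto
        then have yy: "edge y y \<in># E" by (simp add: count_eq_zero_iff[symmetric])
        obtain u where uV: "u \<in> V" and ou: "odd (k u)" using odd by blast
        have "odd (card (nbrs E u))" using state_deg[OF st uV] ou by simp
        then have "nbrs E u \<noteq> {}" by auto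
        then obtain u' where uu': "nadj E u u'" unfolding nbrs_def by auto
        have ua: "u = a \<or> nadj E a u"
        proof -
          have "u = a \<or> u' = a \<or> nadj E a u \<or> nadj E a u'" using C4[OF uu'] .
          moreover have "u' = a \<Longrightarrow> nadj E a u" using uu' nadj_sym[of E u u'] by simp
          moreover have "nadj E a u' \<Longrightarrow> u \<noteq> a \<Longrightarrow> nadj E a u"
          proof -
            assume "nadj E a u'" "u \<noteq> a"
            then have "nadj E u' a" "nadj E u' u" using uu' nadj_sym[of E a u'] nadj_sym[of E u u'] by simp_all
            then show "nadj E a u" using cl[of u' a u] \<open>u \<noteq> a\<close> by simp
          qed
          ultimately show ?thesis by blast
        qed
        have cardeq: "card (nbrs E u) = card (nbrs E a)"
        proof (cases "u = a")
          case True then show ?thesis by simp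
        next
          case False
          then have au: "nadj E a u" using ua by simp
          have ua': "nadj E u a" using au nadj_sym[of E a u] by simp
          have eq: "nbrs E u = insert a (nbrs E a - {u})"
          proof
            show "nbrs E u \<subseteq> insert a (nbrs E a - {u})"
            proof
              fix w assume "w \<in> nbrs E u"
              then have uw: "nadj E u w" unfolding nbrs_def by simp
              then have "w \<noteq> u" by (auto dest: nadj_in)
              moreover have "w \<noteq> a \<Longrightarrow> nadj E a w" using cl[OF ua' uw] by simp
              ultimately show "w \<in> insert a (nbrs E a - {u})" unfolding nbrs_def by auto
            qed
          next
            show "insert a (nbrs E a - {u}) \<subseteq> nbrs E u"
            proof
              fix w assume "w \<in> insert a (nbrs E a - {u})"
              then have "w = a \<or> (nadj E a w \<and> w \<noteq> u)" unfolding nbrs_def by auto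
              then have "nadj E u w" using ua' cl[OF au, of w] by auto
              then show "w \<in> nbrs E u" unfolding nbrs_def by simp
            qed
          qed
          have "a \<notin> nbrs E a" unfolding nbrs_def nadj_def by simp
          moreover have "u \<in> nbrs E a" using au unfolding nbrs_def by simp
          moreover have "card (nbrs E a) > 0" using \<open>u \<in> nbrs E a\<close> nbrs_finite[of E a] card_gt_0_iff by blast
          ultimately show ?thesis unfolding eq using nbrs_finite[of E a]
            by (simp add: card_Diff_singleton)
        qed
        have oa: "odd (card (nbrs E a))" using cardeq \<open>odd (card (nbrs E u))\<close> by simp
        have "\<exists>d. nadj E a d \<and> d \<noteq> b \<and> d \<noteq> c"
        proof (rule ccontr)
          assume "\<not> ?thesis"
          then have "nbrs E a = {b, c}" using ab ac unfolding nbrs_def by auto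
          then show False using oa bc by simp
        qed
        then obtain d where ad: "nadj E a d" and db: "d \<noteq> b" and dc: "d \<noteq> c" by blast
        have bd: "nadj E b d" using cl[OF ab ad] db by simp
        show ?thesis by (rule step, rule moveQ[OF st ab ac ad bc db[symmetric] dc[symmetric] bd ny yy])
      qed
    qed
  qed
qed


lemma edge_eq_set: "edge p q = edge a b \<longleftrightarrow> {p, q} = {a, b}"
  by (simp add: edge_eq doubleton_eq_iff)

lemma nadj_swp:
  assumes ml: "multiloop_graph V E" and sub: "{#edge u v, edge x y#} \<subseteq># E"
  shows "nadj (swp E u v x y) p q \<longleftrightarrow>
    (nadj E p q \<and> edge p q \<noteq> edge u v \<and> edge p q \<noteq> edge x y) \<or> (p \<noteq> q \<and> (edge p q = edge u x \<or> edge p q = edge v y))"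
proof (cases "p = q")
  case True then show ?thesis unfolding nadj_def by simp
next
  case pq: False
  have c: "count (swp E u v x y) (edge p q) + count {#edge u v, edge x y#} (edge p q) = count E (edge p q) + count {#edge u x, edge v y#} (edge p q)"
    by (rule count_swp[OF sub])
  have cE: "count E (edge p q) \<le> 1" using ml pq unfolding multiloop_graph_def by blast
  show ?thesis
  proof (cases "edge p q = edge u v \<or> edge p q = edge x y")
    case True
    then have "count {#edge u v, edge x y#} (edge p q) \<ge> 1" by auto
    then have "count (swp E u v x y) (edge p q) \<le> count {#edge u x, edge v y#} (edge p q)" using c cE by linarith
    moreover have "count {#edge u x, edge v y#} (edge p q) \<le> count (swp E u v x y) (edge p q)" unfolding swp_def by simp
    ultimately have "count (swp E u v x y) (edge p q) = count {#edge u x, edge v y#} (edge p q)" by simp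
    then have "edge p q \<in># swp E u v x y \<longleftrightarrow> edge p q \<in># {#edge u x, edge v y#}"
      by (metis count_eq_zero_iff)
    then show ?thesis using True pq unfolding nadj_def by auto
  next
    case False
    then have "count {#edge u v, edge x y#} (edge p q) = 0" by auto
    then have "count (swp E u v x y) (edge p q) = count E (edge p q) + count {#edge u x, edge v y#} (edge p q)" using c by simp
    then have "edge p q \<in># swp E u v x y \<longleftrightarrow> edge p q \<in># E \<or> edge p q \<in># {#edge u x, edge v y#}"
      by (metis add_is_0 count_eq_zero_iff count_union)
    then show ?thesis using False pq unfolding nadj_def by auto
  qed
qed


lemma state_det:
  assumes st1: "E \<in> multiloop_graphs V k" and st2: "E' \<in> multiloop_graphs V k"
    and same: "\<And>a b. nadj E a b \<longleftrightarrow> nadj E' a b"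
  shows "E = E'"
proof (rule multiset_eqI)
  fix e
  show "count E e = count E' e"
  proof (cases "e \<in># E \<or> e \<in># E'")
    case False then show ?thesis by (simp add: not_in_iff)
  next
    case True
    have g1: "is_graph_on V E" and g2: "is_graph_on V E'"
      using st1 st2 unfolding multiloop_graphs_def multiloop_graph_def by auto
    obtain p q where pV: "p \<in> V" and e: "e = edge p q" using True g1 g2 unfolding is_graph_on_def by blast
    show ?thesis
    proof (cases "p = q")
      case True
      have "nbrs E p = nbrs E' p" unfolding nbrs_def by (intro Collect_cong) (rule same)
      then show ?thesis using state_deg[OF st1 pV] state_deg[OF st2 pV] e True by simp
    next
      case False
      have c1: "count E e \<le> 1" and c2: "count E' e \<le> 1"
        using st1 st2 False e unfolding multiloop_graphs_def multiloop_graph_def by auto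
      have "e \<in># E \<longleftrightarrow> e \<in># E'" using same[of p q] False e unfolding nadj_def by simp
      then have "(count E e = 0) = (count E' e = 0)" by (simp add: count_eq_zero_iff)
      then show ?thesis using c1 c2 by linarith
    qed
  qed
qed

lemma match_card:
  assumes st: "E \<in> multiloop_graphs V k" and m: "matching E" and vV: "v \<in> V"
  shows "card (nbrs E v) = k v mod 2"
proof -
  have "card (nbrs E v) \<le> Suc 0"
    using m nbrs_finite[of E v] unfolding matching_def nbrs_def by (subst card_le_Suc0_iff_eq) auto
  moreover have "k v = card (nbrs E v) + 2 * count E (edge v v)" by (rule state_deg[OF st vV])
  ultimately show ?thesis by presburger
qed

lemma match_conn:
  assumes fin: "finite V" and st': "M' \<in> multiloop_graphs V k" and m': "matching M'"
  shows "M \<in> multiloop_graphs V k \<Longrightarrow> matching M \<Longrightarrow> (Gll_adj V k)\<^sup>*\<^sup>* M M'"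
proof (induction "card (V \<times> V) - card {(p, q). nadj M p q \<and> nadj M' p q}" arbitrary: M rule: less_induct)
  case less
  note st = less.prems(1) and m = less.prems(2)
  have ml: "multiloop_graph V M" using st by (rule state_ml)
  show ?case
  proof (cases "\<forall>a c. nadj M' a c \<longrightarrow> nadj M a c")
    case True
    have "nbrs M a = nbrs M' a" for a
    proof (cases "a \<in> V")
      case aV: True
      have sub: "nbrs M' a \<subseteq> nbrs M a" using True unfolding nbrs_def by auto
      have "card (nbrs M' a) = card (nbrs M a)" using match_card[OF st m aV] match_card[OF st' m' aV] by simp
      then show ?thesis using card_subset_eq[OF nbrs_finite sub] by simp
    next
      case False
      then show ?thesis using nadj_V[OF st, of a] nadj_V[OF st', of a] unfolding nbrs_def by auto
    qed
    then have "nadj M a b \<longleftrightarrow> nadj M' a b" for a b unfolding nbrs_def by blast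
    then have "M = M'" using state_det[OF st st'] by blast
    then show ?thesis by simp
  next
    case False
    then obtain a c where ac': "nadj M' a c" and nac: "\<not> nadj M a c" by blast
    have aV: "a \<in> V" and cV: "c \<in> V" using nadj_V[OF st' ac'] by auto
    have ca': "nadj M' c a" using ac' nadj_sym[of M' a c] by simp
    have "card (nbrs M a) = card (nbrs M' a)" using match_card[OF st m aV] match_card[OF st' m' aV] by simp
    moreover have "nbrs M' a \<noteq> {}" using ac' unfolding nbrs_def by auto
    ultimately have "nbrs M a \<noteq> {}" using nbrs_finite[of M' a] by auto
    then obtain b where ab: "nadj M a b" unfolding nbrs_def by auto
    have "card (nbrs M c) = card (nbrs M' c)" using match_card[OF st m cV] match_card[OF st' m' cV] by simp
    moreover have "nbrs M' c \<noteq> {}" using ca' unfolding nbrs_def by auto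
    ultimately have "nbrs M c \<noteq> {}" using nbrs_finite[of M' c] by auto
    then obtain d where cd: "nadj M c d" unfolding nbrs_def by auto
    have ba: "nadj M b a" using ab nadj_sym[of M a b] by simp
    have dc: "nadj M d c" using cd nadj_sym[of M c d] by simp
    have dist: "a \<noteq> b" "c \<noteq> d" "a \<noteq> c" using ab cd ac' by (auto dest: nadj_in)
    have bc: "b \<noteq> c" using ab nac by auto
    have da: "d \<noteq> a" using cd nac nadj_sym[of M c a] by auto
    have bd: "b \<noteq> d"
    proof
      assume "b = d"
      then have "nadj M b c" using dc by simp
      then have "a = c" using m ba unfolding matching_def by blast
      then show False using dist by simp
    qed
    have nbd: "\<not> nadj M b d" using m ba da unfolding matching_def by blast
    have sub: "{#edge a b, edge c d#} \<subseteq># M"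
      by (rule pair_sub) (use ab cd dist da in \<open>auto dest: nadj_in simp: edge_eq\<close>)
    define M1 where "M1 = swp M a b c d"
    have s1: "M1 \<in> multiloop_graphs V k \<and> (Gll_adj V k)\<^sup>*\<^sup>* M M1"
      unfolding M1_def
      by (rule swp_state[OF st sub]) (use nac nbd dist da bd in \<open>auto simp: edge_eq nadj_def\<close>)
    have ch: "nadj M1 p q \<longleftrightarrow> (nadj M p q \<and> edge p q \<noteq> edge a b \<and> edge p q \<noteq> edge c d) \<or>
        (p \<noteq> q \<and> (edge p q = edge a c \<or> edge p q = edge b d))" for p q
      unfolding M1_def by (rule nadj_swp[OF ml sub])
    have mM: "\<And>p q1 q2. nadj M p q1 \<Longrightarrow> nadj M p q2 \<Longrightarrow> q1 = q2" using m unfolding matching_def by blast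
    have na: "q = c" if "nadj M1 a q" for q
    proof -
      have "nadj M a q \<Longrightarrow> edge a q \<noteq> edge a b \<Longrightarrow> False" using mM[OF ab] by auto
      then show ?thesis using that ch[of a q] dist da bd by (auto simp: edge_eq)
    qed
    have nc: "q = a" if "nadj M1 c q" for q
    proof -
      have "nadj M c q \<Longrightarrow> edge c q \<noteq> edge c d \<Longrightarrow> False" using mM[OF cd] by auto
      then show ?thesis using that ch[of c q] dist da bd bc by (auto simp: edge_eq)
    qed
    have nb: "q = d" if "nadj M1 b q" for q
    proof -
      have "nadj M b q \<Longrightarrow> edge b q \<noteq> edge a b \<Longrightarrow> False" using mM[OF ba] edge_sym[of a b] by auto
      then show ?thesis using that ch[of b q] dist da bd bc by (auto simp: edge_eq)
    qed
    have nd: "q = b" if "nadj M1 d q" for q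
    proof -
      have "nadj M d q \<Longrightarrow> edge d q \<noteq> edge c d \<Longrightarrow> False" using mM[OF dc] edge_sym[of c d] by auto
      then show ?thesis using that ch[of d q] dist da bd bc by (auto simp: edge_eq)
    qed
    have no: "nadj M p q" if "nadj M1 p q" "p \<noteq> a" "p \<noteq> b" "p \<noteq> c" "p \<noteq> d" for p q
      using that ch[of p q] by (auto simp: edge_eq)
    have m1: "matching M1"
      unfolding matching_def
    proof (intro allI impI)
      fix p q1 q2 assume h: "nadj M1 p q1 \<and> nadj M1 p q2"
      show "q1 = q2"
      proof (cases "p = a \<or> p = b \<or> p = c \<or> p = d")
        case True then show ?thesis using h na nb nc nd by blast
      next
        case False then show ?thesis using h no mM by blast
      qed
    qed
    let ?A = "\<lambda>M. {(p, q). nadj M p q \<and> nadj M' p q}"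
    have sub_agr: "?A M \<subseteq> ?A M1"
    proof
      fix pq assume "pq \<in> ?A M"
      then obtain p q where pq: "pq = (p, q)" "nadj M p q" "nadj M' p q" by blast
      have mM': "\<And>p q1 q2. nadj M' p q1 \<Longrightarrow> nadj M' p q2 \<Longrightarrow> q1 = q2" using m' unfolding matching_def by blast
      have "edge p q \<noteq> edge a b"
      proof
        assume "edge p q = edge a b"
        then have "nadj M' a b" using pq(3) nadj_sym[of M' p q] by (auto simp: edge_eq)
        then show False using mM'[OF ac'] bc by simp
      qed
      moreover have "edge p q \<noteq> edge c d"
      proof
        assume "edge p q = edge c d"
        then have "nadj M' c d" using pq(3) nadj_sym[of M' p q] by (auto simp: edge_eq)
        then show False using mM'[OF ca'] da by simp
      qed
      ultimately have "nadj M1 p q" using ch[of p q] pq(2) by blast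
      then show "pq \<in> ?A M1" using pq by simp
    qed
    have ac1: "(a, c) \<in> ?A M1" using ch[of a c] ac' dist by simp
    have "(a, c) \<notin> ?A M" using nac by simp
    then have psub: "?A M \<subset> ?A M1" using sub_agr ac1 by blast
    have fin2: "finite (V \<times> V)" using fin by simp
    have subV: "?A M1 \<subseteq> V \<times> V" using nadj_V[OF conjunct1[OF s1]] by auto
    have "card (?A M) < card (?A M1)" using psub finite_subset[OF subV fin2] by (rule psubset_card_mono[rotated])
    moreover have "card (?A M1) \<le> card (V \<times> V)" using card_mono[OF fin2 subV] .
    ultimately have lt: "card (V \<times> V) - card (?A M1) < card (V \<times> V) - card (?A M)" by linarith
    have "(Gll_adj V k)\<^sup>*\<^sup>* M1 M'" using less.hyps[OF lt conjunct1[OF s1] m1] .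
    then show ?thesis using s1 by (meson rtranclp_trans)
  qed
qed


lemma des_sym:
  assumes "double_edge_swap E E'" shows "double_edge_swap E' E"
proof -
  obtain u v x y where sub: "{#edge u v, edge x y#} \<subseteq># E"
    and E': "E' = E - {#edge u v, edge x y#} + {#edge u x, edge v y#}"
    using assms unfolding double_edge_swap_def by blast
  have s2: "{#edge u x, edge v y#} \<subseteq># E'" unfolding E' by simp
  have "E' - {#edge u x, edge v y#} = E - {#edge u v, edge x y#}" unfolding E' by (simp only: add_diff_cancel_right')
  then have "E = E' - {#edge u x, edge v y#} + {#edge u v, edge x y#}"
    using sub by (metis subset_mset.diff_add)
  then show ?thesis unfolding double_edge_swap_def using s2 by blast
qed

lemma adj_sym: "Gll_adj V k a b \<Longrightarrow> Gll_adj V k b a"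
  unfolding Gll_adj_def by auto

lemma rtranclp_sym: assumes sym: "\<And>a b. r a b \<Longrightarrow> r b a" shows "r\<^sup>*\<^sup>* a b \<Longrightarrow> r\<^sup>*\<^sup>* b a"
proof (induction rule: rtranclp_induct)
  case base then show ?case by simp
next
  case (step y z) then show ?case by (meson converse_rtranclp_into_rtranclp sym)
qed

lemma swap_form:
  assumes "double_edge_swap E E'"
  obtains u v x y where "{#edge u v, edge x y#} \<subseteq># E" "E' = swp E u v x y"
  using assms unfolding double_edge_swap_def swp_def by blast

lemma loops_iso:
  assumes loops: "\<And>e. e \<in># E \<Longrightarrow> is_loop e" and ml': "multiloop_graph V E'"
    and ds: "double_edge_swap E E'"
  shows "E' = E"
proof -
  obtain u v x y where sub: "{#edge u v, edge x y#} \<subseteq># E" and E': "E' = swp E u v x y"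
    using ds by (rule swap_form)
  have "edge u v \<in># E" "edge x y \<in># E" using mset_subset_eqD[OF sub] by auto
  then have uv: "v = u" and xy: "y = x" using loops by fastforce+
  show ?thesis
  proof (cases "u = x")
    case True
    then show ?thesis using E' sub uv xy unfolding swp_def by (metis subset_mset.diff_add)
  next
    case False
    have "count E' (edge u x) \<ge> 2" unfolding E' swp_def uv xy by simp
    then show ?thesis using ml' False unfolding multiloop_graph_def by fastforce
  qed
qed

lemma complete_iso:
  assumes ml: "multiloop_graph V E" and comp: "\<And>p q. p \<in> V \<Longrightarrow> q \<in> V \<Longrightarrow> p \<noteq> q \<Longrightarrow> edge p q \<in># E"
    and ml': "multiloop_graph V E'" and ds: "double_edge_swap E E'"
  shows "E' = E"
proof -
  obtain u v x y where sub: "{#edge u v, edge x y#} \<subseteq># E" and E': "E' = swp E u v x y"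
    using ds by (rule swap_form)
  have g: "is_graph_on V E" using ml unfolding multiloop_graph_def by simp
  have inE: "edge u v \<in># E" "edge x y \<in># E" using mset_subset_eqD[OF sub] by auto
  have V: "u \<in> V" "v \<in> V" "x \<in> V" "y \<in> V" using edge_in_V[OF g inE(1)] edge_in_V[OF g inE(2)] by auto
  have key: "edge p q = edge u v \<or> edge p q = edge x y"
    if pq: "p \<in> V" "q \<in> V" "p \<noteq> q" and f: "edge p q = edge u x \<or> edge p q = edge v y" for p q
  proof -
    have c: "count E' (edge p q) + count {#edge u v, edge x y#} (edge p q) = count E (edge p q) + count {#edge u x, edge v y#} (edge p q)"
      unfolding E' by (rule count_swp[OF sub])
    have "count E' (edge p q) \<le> 1" using ml' pq unfolding multiloop_graph_def by blast
    moreover have "count E (edge p q) \<ge> 1" using comp[OF pq] by (simp add: Suc_le_eq)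
    moreover have "count {#edge u x, edge v y#} (edge p q) \<ge> 1" using f by auto
    ultimately have "count {#edge u v, edge x y#} (edge p q) \<ge> 1" using c by linarith
    then show ?thesis by (auto split: if_splits)
  qed
  have AB: "{#edge u v, edge x y#} = {#edge u x, edge v y#}"
  proof (cases "u = x")
    case ux: True
    show ?thesis
    proof (cases "v = y")
      case True
      have "u = v"
      proof (rule ccontr)
        assume "u \<noteq> v"
        then have "count E (edge u v) \<le> 1" using ml unfolding multiloop_graph_def by blast
        moreover have "count {#edge u v, edge x y#} (edge u v) \<le> count E (edge u v)" using sub by (meson mset_subset_eq_count)
        ultimately show False using ux True by simp
      qed
      then show ?thesis using ux True by simp
    next
      case vy: False
      have "edge v y = edge u v \<or> edge v y = edge x y" using key[OF V(2) V(4) vy] by simp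
      then have "y = u \<or> v = u" using vy ux by (auto simp: edge_eq)
      then show ?thesis
      proof
        assume "y = u" then show ?thesis using ux by (simp add: edge_sym[of v x] add_mset_commute)
      next
        assume "v = u" then show ?thesis using ux by simp
      qed
    qed
  next
    case ux: False
    have "edge u x = edge u v \<or> edge u x = edge x y" using key[OF V(1) V(3) ux] by simp
    then have "x = v \<or> y = u" using ux by (auto simp: edge_eq)
    then show ?thesis
    proof
      assume "x = v" then show ?thesis by simp
    next
      assume "y = u" then show ?thesis by (simp add: edge_sym[of x u] edge_sym[of v u] add_mset_commute)
    qed
  qed
  show ?thesis unfolding E' swp_def AB[symmetric] using sub by (metis subset_mset.diff_add)
qed


lemma conv_cond:
  assumes "1 \<le> n"
  shows "(int a - (int n - 1) < 0 \<or> odd (int a - (int n - 1))) \<longleftrightarrow> (a < n - 1 \<or> odd (a - (n - 1)))"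
proof (cases "a < n - 1")
  case True
  have "int a < int (n - 1)" using True by simp
  moreover have "int (n - 1) = int n - 1" using assms by simp
  ultimately have "int a - (int n - 1) < 0" by linarith
  then show ?thesis using True by blast
next
  case False
  then have "int a - (int n - 1) = int (a - (n - 1))" using assms by simp
  then show ?thesis using False by (simp add: even_of_nat)
qed

definition L0 :: "'a set \<Rightarrow> ('a \<Rightarrow> nat) \<Rightarrow> 'a multiset multiset" where
  "L0 V k = (\<Sum>u\<in>V. replicate_mset (k u div 2) (edge u u))"

lemma L0_mem: "finite V \<Longrightarrow> e \<in># L0 V k \<Longrightarrow> \<exists>u\<in>V. e = edge u u"
  unfolding L0_def by (auto simp: set_mset_sum split: if_splits)

lemma L0_count: "finite V \<Longrightarrow> v \<in> V \<Longrightarrow> count (L0 V k) (edge v v) = k v div 2"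
  unfolding L0_def count_sum by (simp add: edge_eq if_distrib)

lemma L0_state:
  assumes fin: "finite V" and ev: "\<forall>u\<in>V. even (k u)"
  shows "L0 V k \<in> multiloop_graphs V k"
proof -
  have ml: "multiloop_graph V (L0 V k)"
    unfolding multiloop_graph_def is_graph_on_def
  proof (intro conjI allI impI ballI)
    fix e assume "e \<in># L0 V k" then show "\<exists>u v. u \<in> V \<and> v \<in> V \<and> e = edge u v" using L0_mem[OF fin] by blast
  next
    fix p q :: 'a assume "p \<noteq> q"
    then have "edge p q \<notin># L0 V k" using L0_mem[OF fin] by (force simp: edge_eq)
    then show "count (L0 V k) (edge p q) \<le> 1" by (simp add: not_in_iff)
  qed
  moreover have "degree (L0 V k) v = k v" if vV: "v \<in> V" for v
  proof -
    have "nbrs (L0 V k) v = {}" unfolding nbrs_def nadj_def using L0_mem[OF fin] by (force simp: edge_eq)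
    then show ?thesis using degree_decomp[OF ml, of v] L0_count[OF fin vV] ev vV by simp
  qed
  ultimately show ?thesis unfolding multiloop_graphs_def by blast
qed

definition Kc :: "'a set \<Rightarrow> ('a \<Rightarrow> nat) \<Rightarrow> 'a multiset multiset" where
  "Kc V k = mset_set ((\<lambda>(p, q). edge p q) ` {(p, q). p \<in> V \<and> q \<in> V \<and> p \<noteq> q})
     + (\<Sum>u\<in>V. replicate_mset ((k u - (card V - 1)) div 2) (edge u u))"

lemma Kc_state:
  assumes fin: "finite V" and full: "\<forall>v\<in>V. card V - 1 \<le> k v \<and> even (k v - (card V - 1))"
  shows "Kc V k \<in> multiloop_graphs V k" and "\<And>p q. p \<in> V \<Longrightarrow> q \<in> V \<Longrightarrow> p \<noteq> q \<Longrightarrow> edge p q \<in># Kc V k"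
proof -
  define S where "S = (\<lambda>(p, q). edge p q) ` {(p, q). p \<in> V \<and> q \<in> V \<and> p \<noteq> q}"
  define Lp where "Lp = (\<Sum>u\<in>V. replicate_mset ((k u - (card V - 1)) div 2) (edge u u))"
  have KS: "Kc V k = mset_set S + Lp" unfolding Kc_def S_def Lp_def by simp
  have finS: "finite S" unfolding S_def
    by (rule finite_imageI, rule finite_subset[of _ "V \<times> V"]) (use fin in auto)
  have Smem: "e \<in> S \<longleftrightarrow> (\<exists>p q. p \<in> V \<and> q \<in> V \<and> p \<noteq> q \<and> e = edge p q)" for e
    unfolding S_def by auto
  have Lpmem: "e \<in># Lp \<Longrightarrow> \<exists>u\<in>V. e = edge u u" for e
    unfolding Lp_def using fin by (auto simp: set_mset_sum split: if_splits)
  have Lpcount: "count Lp (edge v v) = (k v - (card V - 1)) div 2" if "v \<in> V" for v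
    unfolding Lp_def count_sum using fin that by (simp add: edge_eq if_distrib)
  have mem: "e \<in># Kc V k \<longleftrightarrow> e \<in> S \<or> e \<in># Lp" for e
    unfolding KS using finS by simp
  show comp: "edge p q \<in># Kc V k" if "p \<in> V" "q \<in> V" "p \<noteq> q" for p q
    unfolding mem Smem using that by blast
  have ml: "multiloop_graph V (Kc V k)"
    unfolding multiloop_graph_def is_graph_on_def
  proof (intro conjI allI impI ballI)
    fix e assume "e \<in># Kc V k"
    then show "\<exists>u v. u \<in> V \<and> v \<in> V \<and> e = edge u v" unfolding mem Smem using Lpmem by blast
  next
    fix p q :: 'a assume pq: "p \<noteq> q"
    have "edge p q \<notin># Lp" using Lpmem pq by (force simp: edge_eq)
    then have "count Lp (edge p q) = 0" by (simp add: not_in_iff)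
    moreover have "count (mset_set S) (edge p q) \<le> 1" by (simp add: count_mset_set')
    ultimately show "count (Kc V k) (edge p q) \<le> 1" unfolding KS by simp
  qed
  moreover have "degree (Kc V k) v = k v" if vV: "v \<in> V" for v
  proof -
    have "nbrs (Kc V k) v = V - {v}"
    proof
      show "nbrs (Kc V k) v \<subseteq> V - {v}"
        using nbrs_sub[of V "Kc V k" v] ml unfolding multiloop_graph_def nbrs_def nadj_def by auto
      show "V - {v} \<subseteq> nbrs (Kc V k) v" using comp vV unfolding nbrs_def nadj_def by auto
    qed
    moreover have "edge v v \<notin> S" unfolding Smem by (auto simp: edge_eq)
    then have "count (Kc V k) (edge v v) = (k v - (card V - 1)) div 2"
      unfolding KS using Lpcount[OF vV] by (simp add: count_mset_set')
    moreover have "card (V - {v}) = card V - 1" using fin vV by simp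
    ultimately show ?thesis using degree_decomp[OF ml, of v] full vV by auto
  qed
  ultimately show "Kc V k \<in> multiloop_graphs V k" unfolding multiloop_graphs_def by blast
qed


lemma iso_contra:
  assumes Z: "Z \<in> multiloop_graphs V k" and noadj: "\<And>Y. \<not> Gll_adj V k Z Y"
    and two: "\<exists>E1 \<in> multiloop_graphs V k. \<exists>E2 \<in> multiloop_graphs V k. E1 \<noteq> E2"
    and conn: "Gll_connected V k"
  shows False
proof -
  obtain X where X: "X \<in> multiloop_graphs V k" "X \<noteq> Z" using two by metis
  have "(Gll_adj V k)\<^sup>*\<^sup>* Z X" using conn Z X(1) unfolding Gll_connected_def by blast
  then show False
  proof (cases rule: converse_rtranclpE)
    case base then show ?thesis using X by simp
  next
    case (step Y) then show ?thesis using noadj by blast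
  qed
qed

theorem theorem2:
  fixes V :: "'a set" and k :: "'a \<Rightarrow> nat" and n :: nat
  assumes "finite V" and "card V = n"
    and "\<forall>u \<in> V. k u \<ge> 1"
    and "\<exists>E1 \<in> multiloop_graphs V k. \<exists>E2 \<in> multiloop_graphs V k. E1 \<noteq> E2"
  shows "Gll_connected V k \<longleftrightarrow>
    ((\<exists>u \<in> V. odd (k u)) \<and>
     (\<exists>v \<in> V. int (k v) - (int n - 1) < 0 \<or> odd (int (k v) - (int n - 1))))"
proof
  assume conn: "Gll_connected V k"
  have fin: "finite V" using assms(1) .
  show "(\<exists>u \<in> V. odd (k u)) \<and> (\<exists>v \<in> V. int (k v) - (int n - 1) < 0 \<or> odd (int (k v) - (int n - 1)))"
  proof
    show "\<exists>u \<in> V. odd (k u)"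
    proof (rule ccontr)
      assume "\<not> ?thesis"
      then have ev: "\<forall>u\<in>V. even (k u)" by blast
      have Z: "L0 V k \<in> multiloop_graphs V k" using L0_state[OF fin ev] .
      have "\<not> Gll_adj V k (L0 V k) Y" for Y
      proof
        assume a: "Gll_adj V k (L0 V k) Y"
        then have ne: "L0 V k \<noteq> Y" and Yst: "Y \<in> multiloop_graphs V k"
          and dd: "double_edge_swap (L0 V k) Y \<or> double_edge_swap Y (L0 V k)"
          unfolding Gll_adj_def by simp_all
        have ds: "double_edge_swap (L0 V k) Y" using dd des_sym[of Y "L0 V k"] by blast
        have lp: "is_loop e" if eL: "e \<in># L0 V k" for e
        proof -
          obtain u where "e = edge u u" using L0_mem[OF fin eL] by blast
          then show ?thesis by simp
        qed
        have "Y = L0 V k"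
          by (rule loops_iso[OF lp state_ml[OF Yst] ds])
        then show False using ne by simp
      qed
      then show False using iso_contra[OF Z _ assms(4) conn] by blast
    qed
  next
    show "\<exists>v \<in> V. int (k v) - (int n - 1) < 0 \<or> odd (int (k v) - (int n - 1))"
    proof (rule ccontr)
      assume "\<not> ?thesis"
      then have full: "\<forall>v\<in>V. card V - 1 \<le> k v \<and> even (k v - (card V - 1))"
      proof (intro ballI)
        fix v assume h: "\<not> (\<exists>v \<in> V. int (k v) - (int n - 1) < 0 \<or> odd (int (k v) - (int n - 1)))" and vV: "v \<in> V"
        have "V \<noteq> {}" using vV by blast
        then have "0 < card V" using fin by (simp add: card_gt_0_iff)
        then have n1: "1 \<le> n" using assms(2) by simp
        have "\<not> (int (k v) - (int n - 1) < 0 \<or> odd (int (k v) - (int n - 1)))" using h vV by blast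
        then have "\<not> (k v < n - 1 \<or> odd (k v - (n - 1)))" using conv_cond[OF n1, of "k v"] by blast
        then show "card V - 1 \<le> k v \<and> even (k v - (card V - 1))" unfolding assms(2) using not_less by blast
      qed
      have Z: "Kc V k \<in> multiloop_graphs V k" using Kc_state(1)[OF fin full] .
      have "\<not> Gll_adj V k (Kc V k) Y" for Y
      proof
        assume a: "Gll_adj V k (Kc V k) Y"
        then have ne: "Kc V k \<noteq> Y" and Yst: "Y \<in> multiloop_graphs V k"
          and dd: "double_edge_swap (Kc V k) Y \<or> double_edge_swap Y (Kc V k)"
          unfolding Gll_adj_def by simp_all
        have ds: "double_edge_swap (Kc V k) Y" using dd des_sym[of Y "Kc V k"] by blast
        have "Y = Kc V k"
          by (rule complete_iso[OF state_ml[OF Z] Kc_state(2)[OF fin full] state_ml[OF Yst] ds])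
        then show False using ne by simp
      qed
      then show False using iso_contra[OF Z _ assms(4) conn] by blast
    qed
  qed
next
  assume h: "(\<exists>u \<in> V. odd (k u)) \<and> (\<exists>v \<in> V. int (k v) - (int n - 1) < 0 \<or> odd (int (k v) - (int n - 1)))"
  have fin: "finite V" using assms(1) .
  have odd: "\<exists>u\<in>V. odd (k u)" using h by blast
  have nonfull: "\<exists>v\<in>V. k v < card V - 1 \<or> odd (k v - (card V - 1))"
  proof -
    obtain v where vV: "v \<in> V" and c: "int (k v) - (int n - 1) < 0 \<or> odd (int (k v) - (int n - 1))" using h by blast
    have "V \<noteq> {}" using vV by blast
    then have "0 < card V" using fin by (simp add: card_gt_0_iff)
    then have "1 \<le> n" using assms(2) by simp
    then have "k v < n - 1 \<or> odd (k v - (n - 1))" using conv_cond[of n "k v"] c by blast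
    then show ?thesis using vV assms(2) by blast
  qed
  show "Gll_connected V k"
    unfolding Gll_connected_def
  proof (intro ballI)
    fix E E' assume E: "E \<in> multiloop_graphs V k" and E': "E' \<in> multiloop_graphs V k"
    obtain M where M: "M \<in> multiloop_graphs V k" "(Gll_adj V k)\<^sup>*\<^sup>* E M" "matching M"
      using reach_matching[OF fin assms(3) odd nonfull E] by blast
    obtain M' where M': "M' \<in> multiloop_graphs V k" "(Gll_adj V k)\<^sup>*\<^sup>* E' M'" "matching M'"
      using reach_matching[OF fin assms(3) odd nonfull E'] by blast
    have "(Gll_adj V k)\<^sup>*\<^sup>* M M'" using match_conn[OF fin M'(1) M'(3) M(1) M(3)] .
    moreover have "(Gll_adj V k)\<^sup>*\<^sup>* M' E'" using rtranclp_sym[OF adj_sym M'(2)] .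
    ultimately show "(Gll_adj V k)\<^sup>*\<^sup>* E E'" using M(2) by (meson rtranclp_trans)
  qed
qed

end
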